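(* For every $n\ge 0$, the number of left-walks of length $2n$ equals the number of right-walks of length $2n$.
   Context: All walks are finite sequences of unit steps from $\{N,E,S,W\}=\{(0,1),(1,0),(0,-1),(-1,0)\}$ on $\mathbb{Z}^2$, starting at $(0,0)$. A walk is \emph{eager} if it contains no two consecutive steps $E$ then $S$, and no two consecutive steps $N$ then $W$. A \emph{QP-subloop} of a walk is a contiguous subsequence of steps starting and ending at the same point $(p,q)$ and visiting only points $(x,y)$ with $x\ge p$, $y\ge q$. A walk is \emph{standard} if every QP-subloop (of positive length) begins with an $N$ step. A \emph{big-walk} is a standard eager walk staying in the half-plane $\{x+y\ge 0\}$ and ending at some point $(x,-x)$. A \emph{left-walk} is a big-walk ending at a point $(x,-x)$ with $x\le 0$; a \emph{right-walk} is a big-walk ending at a point $(x,-x)$ with $x\ge 0$. *)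

theory Defs
  imports Main
begin

datatype step = N | E | S | W

fun dx :: "step \<Rightarrow> int" where
  "dx N = 0" | "dx E = 1" | "dx S = 0" | "dx W = -1"

fun dy :: "step \<Rightarrow> int" where
  "dy N = 1" | "dy E = 0" | "dy S = -1" | "dy W = 0"

definition pos :: "step list \<Rightarrow> nat \<Rightarrow> int \<times> int" where
  "pos w i = (sum_list (map dx (take i w)), sum_list (map dy (take i w)))"

definition eager :: "step list \<Rightarrow> bool" where
  "eager w \<longleftrightarrow> (\<forall>i. Suc i < length w \<longrightarrow>
      \<not> (w ! i = E \<and> w ! Suc i = S) \<and> \<not> (w ! i = N \<and> w ! Suc i = W))"

text \<open>Steps i+1..j (0-based indices i..j-1) form a QP-subloop.\<close>
definition qp_subloop :: "step list \<Rightarrow> nat \<Rightarrow> nat \<Rightarrow> bool" where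
  "qp_subloop w i j \<longleftrightarrow> i \<le> j \<and> j \<le> length w \<and> pos w i = pos w j \<and>
     (\<forall>k. i \<le> k \<and> k \<le> j \<longrightarrow>
        fst (pos w k) \<ge> fst (pos w i) \<and> snd (pos w k) \<ge> snd (pos w i))"

definition standard :: "step list \<Rightarrow> bool" where
  "standard w \<longleftrightarrow> (\<forall>i j. i < j \<and> qp_subloop w i j \<longrightarrow> w ! i = N)"

definition big_walk :: "step list \<Rightarrow> bool" where
  "big_walk w \<longleftrightarrow> standard w \<and> eager w \<and>
     (\<forall>k \<le> length w. fst (pos w k) + snd (pos w k) \<ge> 0) \<and>
     fst (pos w (length w)) + snd (pos w (length w)) = 0"

definition left_walk :: "step list \<Rightarrow> bool" where
  "left_walk w \<longleftrightarrow> big_walk w \<and> fst (pos w (length w)) \<le> 0"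

definition right_walk :: "step list \<Rightarrow> bool" where
  "right_walk w \<longleftrightarrow> big_walk w \<and> fst (pos w (length w)) \<ge> 0"

end

theory Submission
  imports Defs
begin

fun rs :: "step \<Rightarrow> step" where
  "rs N = E" | "rs E = N" | "rs S = W" | "rs W = S"

lemma rs_rs[simp]: "rs (rs s) = s" by (cases s) auto
lemma dx_rs[simp]: "dx (rs s) = dy s" by (cases s) auto
lemma dy_rs[simp]: "dy (rs s) = dx s" by (cases s) auto

lemma pos_sum: "k \<le> length w \<Longrightarrow> pos w k = ((\<Sum>m<k. dx (w!m)), (\<Sum>m<k. dy (w!m)))"
proof (induction k)
  case 0 then show ?case by (simp add: pos_def)
next
  case (Suc k)
  then have "take (Suc k) w = take k w @ [w!k]" by (simp add: take_Suc_conv_app_nth)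
  with Suc show ?case by (simp add: pos_def)
qed

lemma pos_Suc:
  assumes "Suc k \<le> length w"
  shows "fst (pos w (Suc k)) = fst (pos w k) + dx (w!k)" "snd (pos w (Suc k)) = snd (pos w k) + dy (w!k)"
  using pos_sum[of "Suc k" w] pos_sum[of k w] assms by auto

lemma pos_mapR: "pos (map rs w) k = (snd (pos w k), fst (pos w k))"
  by (simp add: pos_def take_map comp_def)

definition lp :: "(nat \<Rightarrow> int \<times> int) \<Rightarrow> nat \<Rightarrow> nat \<Rightarrow> bool" where
 "lp P i j \<longleftrightarrow> i \<le> j \<and> P i = P j \<and> (\<forall>k. i \<le> k \<and> k \<le> j \<longrightarrow> fst (P k) \<ge> fst (P i) \<and> snd (P k) \<ge> snd (P i))"

lemma qp_lp: "qp_subloop w i j \<longleftrightarrow> lp (pos w) i j \<and> j \<le> length w"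
  by (auto simp: qp_subloop_def lp_def)

lemma qp_mapR: "qp_subloop (map rs w) i j \<longleftrightarrow> qp_subloop w i j"
  by (auto simp: qp_subloop_def pos_mapR prod_eq_iff)

lemma lp_intro: "i \<le> j \<Longrightarrow> Q i = Q j \<Longrightarrow> (\<And>k. i \<le> k \<Longrightarrow> k \<le> j \<Longrightarrow> fst (Q i) \<le> fst (Q k) \<and> snd (Q i) \<le> snd (Q k)) \<Longrightarrow> lp Q i j"
  by (auto simp: lp_def)

lemma lp_flip:
  assumes lab: "lp P a b"
    and Q: "\<And>k. k \<le> n \<Longrightarrow> Q k = (if k \<le> a \<or> b \<le> k then P k else (fst (P a) + snd (P k) - snd (P a), snd (P a) + fst (P k) - fst (P a)))"
    and bn: "b \<le> n" and jn: "j \<le> n" and l: "lp P i j"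
  shows "lp Q i j"
proof -
  have ab: "a \<le> b" and Pb: "P b = P a" and ge: "\<And>k. a \<le> k \<Longrightarrow> k \<le> b \<Longrightarrow> fst (P k) \<ge> fst (P a) \<and> snd (P k) \<ge> snd (P a)"
    using lab by (auto simp: lp_def)
  have ij: "i \<le> j" and Pj: "P j = P i" and ge2: "\<And>k. i \<le> k \<Longrightarrow> k \<le> j \<Longrightarrow> fst (P k) \<ge> fst (P i) \<and> snd (P k) \<ge> snd (P i)"
    using l by (auto simp: lp_def)
  have Q1: "Q k = P k" if "k \<le> n" "k \<le> a \<or> b \<le> k" for k using Q[OF that(1)] that by auto
  have Q2: "fst (Q k) = fst (P a) + snd (P k) - snd (P a) \<and> snd (Q k) = snd (P a) + fst (P k) - fst (P a)"
    if "a \<le> k" "k \<le> b" for k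
  proof (cases "k \<le> a \<or> b \<le> k")
    case True
    then have "P k = P a" using Pb that by (metis le_antisym)
    then show ?thesis using Q1 True that bn by auto
  next
    case False then show ?thesis using Q[of k] that bn by auto
  qed
  have Qge: "fst (Q k) \<ge> fst (P a) \<and> snd (Q k) \<ge> snd (P a)" if "a \<le> k" "k \<le> b" for k
    using Q2[OF that] ge[OF that] by auto
  show ?thesis
  proof (cases "j \<le> a \<or> b \<le> i")
    case True
    then have "Q k = P k" if "i \<le> k" "k \<le> j" for k using Q1 that jn by auto
    then show ?thesis using l unfolding lp_def by auto
  next
    case nd: False
    show ?thesis
    proof (cases "a \<le> i \<and> j \<le> b")
      case True
      then show ?thesis using Q2 ij Pj ge2 unfolding lp_def prod_eq_iff
        by (smt (verit) le_trans)
    next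
      case False
      consider (c3) "i \<le> a" "b \<le> j" | (c4) "i < a" "j < b" | (c5) "a < i" "b < j"
        using False nd by linarith
      then show ?thesis
      proof cases
        case c3
        have QiP: "Q i = P i" "Q j = P j" using Q1 c3 jn ij by auto
        have Pa: "fst (P a) \<ge> fst (P i) \<and> snd (P a) \<ge> snd (P i)" using ge2 c3 ab by auto
        show ?thesis
        proof (rule lp_intro)
          fix k assume k0: "i \<le> k" "k \<le> j"
          then have k: "i \<le> k \<and> k \<le> j" by simp
          show "fst (Q i) \<le> fst (Q k) \<and> snd (Q i) \<le> snd (Q k)"
          proof (cases "a \<le> k \<and> k \<le> b")
            case True then show ?thesis using Qge[of k] Pa QiP by auto
          next
            case False then show ?thesis using Q1[of k] k jn ge2[of k] QiP by auto
          qed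
        qed (use ij QiP Pj in auto)
      next
        case c4
        have "fst (P a) \<ge> fst (P i) \<and> snd (P a) \<ge> snd (P i)" using ge2 c4 nd by auto
        moreover have "fst (P j) \<ge> fst (P a) \<and> snd (P j) \<ge> snd (P a)" using ge c4 nd by auto
        ultimately have Pa: "P a = P i" using Pj by (simp add: prod_eq_iff)
        have Qi: "Q i = P i" using Q1 c4 jn ij by auto
        have Qj: "Q j = P i" using Q2[of j] c4 nd Pj Pa by (simp add: prod_eq_iff)
        show ?thesis
        proof (rule lp_intro)
          fix k assume k0: "i \<le> k" "k \<le> j"
          then have k: "i \<le> k \<and> k \<le> j" by simp
          show "fst (Q i) \<le> fst (Q k) \<and> snd (Q i) \<le> snd (Q k)"
          proof (cases "a \<le> k")
            case True then show ?thesis using Qge[of k] Pa Qi k c4 by auto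
          next
            case False then show ?thesis using Q1[of k] k jn ge2[of k] Qi by auto
          qed
        qed (use ij Qi Qj in auto)
      next
        case c5
        have "fst (P i) \<ge> fst (P a) \<and> snd (P i) \<ge> snd (P a)" using ge c5 nd by auto
        moreover have "fst (P b) \<ge> fst (P i) \<and> snd (P b) \<ge> snd (P i)" using ge2 c5 nd by auto
        ultimately have Pa: "P i = P a" using Pb by (simp add: prod_eq_iff)
        have Qj: "Q j = P j" using Q1 c5 jn by auto
        have Qi: "Q i = P i" using Q2[of i] c5 nd Pa by (simp add: prod_eq_iff)
        show ?thesis
        proof (rule lp_intro)
          fix k assume k0: "i \<le> k" "k \<le> j"
          then have k: "i \<le> k \<and> k \<le> j" by simp
          show "fst (Q i) \<le> fst (Q k) \<and> snd (Q i) \<le> snd (Q k)"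
          proof (cases "k < b")
            case True then show ?thesis using Qge[of k] Pa Qi k c5 by auto
          next
            case False then show ?thesis using Q1[of k] k jn ge2[of k] Qi by auto
          qed
        qed (use ij Qi Qj Pj in auto)
      qed
    qed
  qed
qed

definition flipset :: "nat set \<Rightarrow> step list \<Rightarrow> step list" where
  "flipset A w = map (\<lambda>k. if k \<in> A then rs (w!k) else w!k) [0..<length w]"

lemma flipset_length[simp]: "length (flipset A w) = length w"
  by (simp add: flipset_def)

lemma flipset_nth[simp]: "k < length w \<Longrightarrow> flipset A w ! k = (if k \<in> A then rs (w!k) else w!k)"
  by (simp add: flipset_def)

lemma flipset_empty[simp]: "flipset {} w = w"
  by (rule nth_equalityI) auto

lemma flipset_comp: "A \<inter> B = {} \<Longrightarrow> flipset A (flipset B w) = flipset (A \<union> B) w"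
  by (rule nth_equalityI) auto

lemma sum_split3:
  fixes f :: "nat \<Rightarrow> int"
  assumes "a \<le> k"
  shows "(\<Sum>m<k. f m) = (\<Sum>m<a. f m) + (\<Sum>m\<in>{a..<k}. f m)"
  using sum.atLeastLessThan_concat[of 0 a k f] assms by (simp add: atLeast0LessThan)

lemma pos_flip:
  assumes eq: "pos v a = pos v b" and ab: "a \<le> b" and bl: "b \<le> length v" and kl: "k \<le> length v"
  shows "pos (flipset {a..<b} v) k = (if k \<le> a \<or> b \<le> k then pos v k else
     (fst (pos v a) + snd (pos v k) - snd (pos v a), snd (pos v a) + fst (pos v k) - fst (pos v a)))"
proof -
  let ?f = "flipset {a..<b} v"
  have P: "pos v k' = ((\<Sum>m<k'. dx (v!m)), (\<Sum>m<k'. dy (v!m)))" if "k' \<le> length v" for k'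
    using pos_sum that by blast
  have Q: "pos ?f k = ((\<Sum>m<k. if a \<le> m \<and> m < b then dy (v!m) else dx (v!m)),
                       (\<Sum>m<k. if a \<le> m \<and> m < b then dx (v!m) else dy (v!m)))"
    using pos_sum[of k ?f] kl by (auto intro!: sum.cong)
  show ?thesis
  proof (cases "k \<le> a")
    case True
    then show ?thesis using Q P[OF kl] by (auto intro!: sum.cong)
  next
    case ka: False
    show ?thesis
    proof (cases "k < b")
      case True
      let ?g = "\<lambda>m. if a \<le> m \<and> m < b then dy (v!m) else dx (v!m)"
      let ?h = "\<lambda>m. if a \<le> m \<and> m < b then dx (v!m) else dy (v!m)"
      have g1: "(\<Sum>m<a. ?g m) = (\<Sum>m<a. dx (v!m))" "(\<Sum>m<a. ?h m) = (\<Sum>m<a. dy (v!m))"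
        by (intro sum.cong; simp)+
      have g2: "(\<Sum>m\<in>{a..<k}. ?g m) = (\<Sum>m\<in>{a..<k}. dy (v!m))" "(\<Sum>m\<in>{a..<k}. ?h m) = (\<Sum>m\<in>{a..<k}. dx (v!m))"
        using True by (intro sum.cong; simp)+
      have 1: "(\<Sum>m<k. ?g m) = (\<Sum>m<a. dx (v!m)) + (\<Sum>m\<in>{a..<k}. dy (v!m))"
        using sum_split3[of a k ?g] ka g1 g2 by simp
      have 2: "(\<Sum>m<k. ?h m) = (\<Sum>m<a. dy (v!m)) + (\<Sum>m\<in>{a..<k}. dx (v!m))"
        using sum_split3[of a k ?h] ka g1 g2 by simp
      have 3: "(\<Sum>m<k. dy (v!m)) = (\<Sum>m<a. dy (v!m)) + (\<Sum>m\<in>{a..<k}. dy (v!m))"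
        using sum_split3 ka by simp
      have 4: "(\<Sum>m<k. dx (v!m)) = (\<Sum>m<a. dx (v!m)) + (\<Sum>m\<in>{a..<k}. dx (v!m))"
        using sum_split3 ka by simp
      have "a \<le> length v" using ab bl by simp
      then show ?thesis using Q P[OF kl] P[of a] 1 2 3 4 ka True by auto
    next
      case kb: False
      let ?g = "\<lambda>m. if a \<le> m \<and> m < b then dy (v!m) else dx (v!m)"
      let ?h = "\<lambda>m. if a \<le> m \<and> m < b then dx (v!m) else dy (v!m)"
      have s1: "(\<Sum>m<k. F m) = (\<Sum>m<a. F m) + (\<Sum>m\<in>{a..<b}. F m) + (\<Sum>m\<in>{b..<k}. F m)" for F :: "nat \<Rightarrow> int"
        using sum_split3[of b k F] sum_split3[of a b F] ab kb by simp
      have g1: "(\<Sum>m<a. ?g m) = (\<Sum>m<a. dx (v!m))" "(\<Sum>m<a. ?h m) = (\<Sum>m<a. dy (v!m))"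
        by (intro sum.cong; simp)+
      have g2: "(\<Sum>m\<in>{a..<b}. ?g m) = (\<Sum>m\<in>{a..<b}. dy (v!m))" "(\<Sum>m\<in>{a..<b}. ?h m) = (\<Sum>m\<in>{a..<b}. dx (v!m))"
        by (intro sum.cong; simp)+
      have g3: "(\<Sum>m\<in>{b..<k}. ?g m) = (\<Sum>m\<in>{b..<k}. dx (v!m))" "(\<Sum>m\<in>{b..<k}. ?h m) = (\<Sum>m\<in>{b..<k}. dy (v!m))"
        by (intro sum.cong; simp)+
      have "(\<Sum>m<k. ?g m) = (\<Sum>m<a. dx (v!m)) + (\<Sum>m\<in>{a..<b}. dy (v!m)) + (\<Sum>m\<in>{b..<k}. dx (v!m))"
        using s1[of ?g] g1 g2 g3 by simp
      moreover have "(\<Sum>m<k. ?h m) = (\<Sum>m<a. dy (v!m)) + (\<Sum>m\<in>{a..<b}. dx (v!m)) + (\<Sum>m\<in>{b..<k}. dy (v!m))"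
        using s1[of ?h] g1 g2 g3 by simp
      moreover have "(\<Sum>m<b. F m) = (\<Sum>m<a. F m) + (\<Sum>m\<in>{a..<b}. F m)" for F :: "nat \<Rightarrow> int"
        using sum_split3[of a b F] ab by simp
      moreover have "a \<le> length v" using ab bl by simp
      ultimately show ?thesis using Q P[OF kl] P[of a] P[OF bl] eq s1[of "\<lambda>m. dx (v!m)"] s1[of "\<lambda>m. dy (v!m)"] ka kb
        by (auto simp: prod_eq_iff)
    qed
  qed
qed

lemma F1:
  assumes "qp_subloop v a b"
  shows "(qp_subloop (flipset {a..<b} v) i j \<longleftrightarrow> qp_subloop v i j) \<and>
         pos (flipset {a..<b} v) (length v) = pos v (length v)"
proof -
  let ?f = "flipset {a..<b} v"
  let ?n = "length v"
  have lab: "lp (pos v) a b" and bl: "b \<le> ?n" and ab: "a \<le> b" and eq: "pos v a = pos v b"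
    using assms by (auto simp: qp_lp lp_def)
  have Qf: "\<And>k. k \<le> ?n \<Longrightarrow> pos ?f k = (if k \<le> a \<or> b \<le> k then pos v k else
     (fst (pos v a) + snd (pos v k) - snd (pos v a), snd (pos v a) + fst (pos v k) - fst (pos v a)))"
    using pos_flip[OF eq ab bl] by blast
  have labQ: "lp (pos ?f) a b" by (rule lp_flip[OF lab Qf bl bl lab])
  have Qa: "pos ?f a = pos v a" using Qf[of a] ab bl by auto
  have Pf: "\<And>k. k \<le> ?n \<Longrightarrow> pos v k = (if k \<le> a \<or> b \<le> k then pos ?f k else
     (fst (pos ?f a) + snd (pos ?f k) - snd (pos ?f a), snd (pos ?f a) + fst (pos ?f k) - fst (pos ?f a)))"
    using Qf Qa by (auto simp: prod_eq_iff)
  have "qp_subloop ?f i j \<longleftrightarrow> qp_subloop v i j"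
    unfolding qp_lp flipset_length
    using lp_flip[OF lab Qf bl, of j i] lp_flip[OF labQ Pf bl, of j i] by blast
  moreover have "pos ?f ?n = pos v ?n" using Qf[of ?n] bl by auto
  ultimately show ?thesis by blast
qed

lemma G:
  assumes "finite M"
  shows "(\<forall>ab\<in>M. qp_subloop u (fst ab) (snd ab)) \<Longrightarrow>
     (\<forall>ab\<in>M. \<forall>cd\<in>M. ab \<noteq> cd \<longrightarrow> {fst ab..<snd ab} \<inter> {fst cd..<snd cd} = {}) \<Longrightarrow>
     (\<forall>i j. qp_subloop (flipset (\<Union>ab\<in>M. {fst ab..<snd ab}) u) i j \<longleftrightarrow> qp_subloop u i j) \<and>
     pos (flipset (\<Union>ab\<in>M. {fst ab..<snd ab}) u) (length u) = pos u (length u)"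
  using assms
proof (induction M rule: finite_induct)
  case empty
  then show ?case by simp
next
  case (insert x F)
  let ?U = "\<Union>ab\<in>F. {fst ab..<snd ab}"
  have dis: "{fst x..<snd x} \<inter> ?U = {}"
    using insert.prems(2) insert.hyps(2) by fastforce
  have IH: "(\<forall>i j. qp_subloop (flipset ?U u) i j \<longleftrightarrow> qp_subloop u i j) \<and>
     pos (flipset ?U u) (length u) = pos u (length u)"
    using insert.IH insert.prems by (simp add: Ball_def)
  have eqU: "flipset (\<Union>ab\<in>insert x F. {fst ab..<snd ab}) u = flipset {fst x..<snd x} (flipset ?U u)"
    using flipset_comp[OF dis] by simp
  have "qp_subloop (flipset ?U u) (fst x) (snd x)" using IH insert.prems(1) by simp
  from F1[OF this] IH show ?case unfolding eqU by simp
qed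

lemma merge:
  assumes "qp_subloop w i j" "qp_subloop w a b" "i \<le> a" "a \<le> j"
  shows "qp_subloop w i (max j b)"
proof (cases "b \<le> j")
  case True then show ?thesis using assms(1) by (simp add: max_def)
next
  case False
  have "fst (pos w a) \<ge> fst (pos w i) \<and> snd (pos w a) \<ge> snd (pos w i)"
    using assms unfolding qp_subloop_def by auto
  moreover have "fst (pos w j) \<ge> fst (pos w a) \<and> snd (pos w j) \<ge> snd (pos w a)"
    using assms False unfolding qp_subloop_def by auto
  moreover have "pos w j = pos w i" using assms unfolding qp_subloop_def by auto
  ultimately have Pa: "pos w a = pos w i" by (simp add: prod_eq_iff)
  have mx: "max j b = b" using False by simp
  have ge: "fst (pos w k) \<ge> fst (pos w i) \<and> snd (pos w k) \<ge> snd (pos w i)" if "i \<le> k" "k \<le> b" for k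
  proof (cases "k \<le> j")
    case True then show ?thesis using assms(1) that unfolding qp_subloop_def by auto
  next
    case False
    then have "a \<le> k" using assms(4) by simp
    then show ?thesis using assms(2) that Pa unfolding qp_subloop_def by auto
  qed
  show ?thesis unfolding mx qp_subloop_def using assms(2,3) Pa ge unfolding qp_subloop_def by auto
qed

definition covset :: "step list \<Rightarrow> nat set" where
  "covset w = {k. \<exists>i j. qp_subloop w i j \<and> i \<le> k \<and> k < j}"

definition MaxL :: "step list \<Rightarrow> (nat \<times> nat) set" where
  "MaxL w = {(a,b). a < b \<and> qp_subloop w a b \<and>
     (\<forall>i j. qp_subloop w i j \<and> i < b \<and> a < j \<longrightarrow> a \<le> i \<and> j \<le> b)}"

lemma MaxL_finite: "finite (MaxL w)"
proof -
  have "MaxL w \<subseteq> {..length w} \<times> {..length w}" by (auto simp: MaxL_def qp_subloop_def)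
  then show ?thesis by (rule finite_subset) auto
qed

lemma MaxL_loops: "\<forall>ab\<in>MaxL w. qp_subloop w (fst ab) (snd ab)"
  by (auto simp: MaxL_def)

lemma MaxL_disj: "\<forall>ab\<in>MaxL w. \<forall>cd\<in>MaxL w. ab \<noteq> cd \<longrightarrow> {fst ab..<snd ab} \<inter> {fst cd..<snd cd} = {}"
proof (intro ballI impI)
  fix ab cd assume a: "ab \<in> MaxL w" "cd \<in> MaxL w" "ab \<noteq> cd"
  show "{fst ab..<snd ab} \<inter> {fst cd..<snd cd} = {}"
  proof (rule ccontr)
    assume "{fst ab..<snd ab} \<inter> {fst cd..<snd cd} \<noteq> {}"
    then obtain k where "k \<in> {fst ab..<snd ab} \<inter> {fst cd..<snd cd}" by blast
    then have k: "fst ab \<le> k" "k < snd ab" "fst cd \<le> k" "k < snd cd" by auto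
    obtain p q r t where pq: "ab = (p,q)" "cd = (r,t)" by (cases ab, cases cd) auto
    have m1: "qp_subloop w p q" "\<forall>i j. qp_subloop w i j \<and> i < q \<and> p < j \<longrightarrow> p \<le> i \<and> j \<le> q"
      using a(1) pq unfolding MaxL_def by auto
    have m2: "qp_subloop w r t" "\<forall>i j. qp_subloop w i j \<and> i < t \<and> r < j \<longrightarrow> r \<le> i \<and> j \<le> t"
      using a(2) pq unfolding MaxL_def by auto
    have "r < q" "p < t" using k pq by auto
    then have "p \<le> r \<and> t \<le> q" "r \<le> p \<and> q \<le> t" using m1 m2 by blast+
    then have "fst ab \<le> fst cd \<and> snd cd \<le> snd ab" "fst cd \<le> fst ab \<and> snd ab \<le> snd cd" using pq by auto
    then show False using a(3) by (simp add: prod_eq_iff)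
  qed
qed

lemma MaxL_cov: "covset w = (\<Union>ab\<in>MaxL w. {fst ab..<snd ab})"
proof
  show "(\<Union>ab\<in>MaxL w. {fst ab..<snd ab}) \<subseteq> covset w"
  proof
    fix k assume "k \<in> (\<Union>ab\<in>MaxL w. {fst ab..<snd ab})"
    then obtain p q where "(p,q) \<in> MaxL w" "p \<le> k" "k < q" by auto
    then show "k \<in> covset w" unfolding MaxL_def covset_def by blast
  qed
next
  show "covset w \<subseteq> (\<Union>ab\<in>MaxL w. {fst ab..<snd ab})"
  proof
    fix k assume "k \<in> covset w"
    then have ex: "\<exists>i j. qp_subloop w i j \<and> i \<le> k \<and> k < j" by (simp add: covset_def)
    define a0 where "a0 = (LEAST i. \<exists>j. qp_subloop w i j \<and> i \<le> k \<and> k < j)"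
    have a0P: "\<exists>j. qp_subloop w a0 j \<and> a0 \<le> k \<and> k < j"
      unfolding a0_def using ex by (rule LeastI_ex)
    have a0min: "a0 \<le> i" if "qp_subloop w i j" "i \<le> k" "k < j" for i j
      unfolding a0_def using that by (blast intro: Least_le)
    define b0 where "b0 = (GREATEST j. qp_subloop w a0 j \<and> a0 \<le> k \<and> k < j)"
    obtain j0 where j0: "qp_subloop w a0 j0 \<and> a0 \<le> k \<and> k < j0" using a0P by blast
    have bnd: "\<And>y. qp_subloop w a0 y \<and> a0 \<le> k \<and> k < y \<Longrightarrow> y \<le> length w"
      by (auto simp: qp_subloop_def)
    have b0P: "qp_subloop w a0 b0 \<and> a0 \<le> k \<and> k < b0"
      unfolding b0_def using j0 bnd by (rule GreatestI_nat)
    have b0max: "j \<le> b0" if "qp_subloop w a0 j" "k < j" for j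
      unfolding b0_def using that j0 bnd by (intro Greatest_le_nat) auto
    have mx: "\<forall>i j. qp_subloop w i j \<and> i < b0 \<and> a0 < j \<longrightarrow> a0 \<le> i \<and> j \<le> b0"
    proof (intro allI impI)
      fix i j assume h: "qp_subloop w i j \<and> i < b0 \<and> a0 < j"
      have u: "qp_subloop w (min i a0) (max j b0)"
      proof (cases "i \<le> a0")
        case True
        then show ?thesis using merge[of w i j a0 b0] h b0P by (simp add: min_def)
      next
        case False
        then show ?thesis using merge[of w a0 b0 i j] h b0P by (simp add: min_def max.commute)
      qed
      have "a0 \<le> min i a0" by (rule a0min[OF u]) (use b0P in \<open>auto simp: min_def max_def\<close>)
      then have ai: "a0 \<le> i" by simp
      have "min i a0 = a0" using ai by simp
      then have u2: "qp_subloop w a0 (max j b0)" using u by simp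
      have "max j b0 \<le> b0" using b0max[OF u2] b0P by auto
      then show "a0 \<le> i \<and> j \<le> b0" using ai by simp
    qed
    have "(a0, b0) \<in> MaxL w" unfolding MaxL_def using mx b0P by simp
    then show "k \<in> (\<Union>ab\<in>MaxL w. {fst ab..<snd ab})" using b0P by force
  qed
qed

lemma first_step:
  assumes "qp_subloop w i j" "i < j"
  shows "w!i = N \<or> w!i = E"
proof -
  have l: "Suc i \<le> length w" using assms by (auto simp: qp_subloop_def)
  have "fst (pos w (Suc i)) \<ge> fst (pos w i) \<and> snd (pos w (Suc i)) \<ge> snd (pos w i)"
    using assms unfolding qp_subloop_def by auto
  then show ?thesis using pos_Suc[OF l] by (cases "w!i") auto
qed

lemma last_step:
  assumes "qp_subloop w i j" "i < j"
  shows "w!(j-1) = S \<or> w!(j-1) = W"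
proof -
  obtain m where m: "j = Suc m" using assms by (cases j) auto
  have l: "Suc m \<le> length w" using assms m by (auto simp: qp_subloop_def)
  have "fst (pos w m) \<ge> fst (pos w i) \<and> snd (pos w m) \<ge> snd (pos w i)"
    using assms m unfolding qp_subloop_def by auto
  moreover have "pos w j = pos w i" using assms by (simp add: qp_subloop_def)
  ultimately show ?thesis using pos_Suc[OF l] m by (cases "w!m") (auto simp: prod_eq_iff)
qed

definition T :: "step list \<Rightarrow> step list" where
  "T w = flipset (covset w) (map rs w)"

lemma T_length[simp]: "length (T w) = length w"
  by (simp add: T_def)

lemma T_nth: "k < length w \<Longrightarrow> T w ! k = (if k \<in> covset w then w!k else rs (w!k))"
  by (simp add: T_def)

lemma T_props:
  "(\<forall>i j. qp_subloop (T w) i j \<longleftrightarrow> qp_subloop w i j) \<and>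
   pos (T w) (length w) = (snd (pos w (length w)), fst (pos w (length w)))"
proof -
  have "(\<forall>ab\<in>MaxL w. qp_subloop (map rs w) (fst ab) (snd ab))"
    using MaxL_loops by (simp add: qp_mapR)
  from G[OF MaxL_finite this MaxL_disj] show ?thesis
    unfolding T_def MaxL_cov[symmetric] by (simp add: qp_mapR pos_mapR)
qed

lemma T_loops: "qp_subloop (T w) i j \<longleftrightarrow> qp_subloop w i j"
  using T_props by blast

lemma T_end: "pos (T w) (length w) = (snd (pos w (length w)), fst (pos w (length w)))"
  using T_props by blast

lemma T_cov: "covset (T w) = covset w"
  by (simp add: covset_def T_loops)

lemma TT: "T (T w) = w"
  by (rule nth_equalityI) (auto simp: T_nth T_cov)

lemma T_diag: "k \<le> length w \<Longrightarrow> fst (pos (T w) k) + snd (pos (T w) k) = fst (pos w k) + snd (pos w k)"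
proof -
  assume k: "k \<le> length w"
  have e: "dx (T w ! m) + dy (T w ! m) = dx (w!m) + dy (w!m)" if "m < k" for m
    using that k by (simp add: T_nth)
  have "fst (pos (T w) k) + snd (pos (T w) k) = (\<Sum>m<k. dx (T w ! m) + dy (T w ! m))"
    using pos_sum[of k "T w"] k by (simp add: sum.distrib)
  also have "\<dots> = (\<Sum>m<k. dx (w ! m) + dy (w ! m))" using e by (intro sum.cong) auto
  also have "\<dots> = fst (pos w k) + snd (pos w k)"
    using pos_sum[of k w] k by (simp add: sum.distrib)
  finally show ?thesis .
qed

lemma T_eager: "eager w \<Longrightarrow> eager (T w)"
  unfolding eager_def
proof (intro allI impI)
  fix i assume ea: "\<forall>i. Suc i < length w \<longrightarrow> \<not> (w ! i = E \<and> w ! Suc i = S) \<and> \<not> (w ! i = N \<and> w ! Suc i = W)"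
    and i: "Suc i < length (T w)"
  have il: "Suc i < length w" using i by simp
  show "\<not> (T w ! i = E \<and> T w ! Suc i = S) \<and> \<not> (T w ! i = N \<and> T w ! Suc i = W)"
  proof (cases "i \<in> covset w")
    case ci: True
    show ?thesis
    proof (cases "Suc i \<in> covset w")
      case True then show ?thesis using ci ea il by (simp add: T_nth)
    next
      case False
      from ci obtain a b where ab: "qp_subloop w a b" "a \<le> i" "i < b" by (auto simp: covset_def)
      have "b = Suc i"
      proof (rule ccontr)
        assume "b \<noteq> Suc i"
        then have "Suc i < b" using ab by simp
        moreover have "a \<le> Suc i" using ab by simp
        ultimately have "Suc i \<in> covset w" using ab(1) unfolding covset_def by blast
        then show False using False by simp
      qed
      then have "w!i = S \<or> w!i = W" using last_step[OF ab(1)] ab(2,3) by simp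
      then show ?thesis using ci il by (auto simp: T_nth)
    qed
  next
    case ci: False
    show ?thesis
    proof (cases "Suc i \<in> covset w")
      case True
      from True obtain a b where ab: "qp_subloop w a b" "a \<le> Suc i" "Suc i < b" by (auto simp: covset_def)
      have "a = Suc i"
      proof (rule ccontr)
        assume "a \<noteq> Suc i"
        then have "a \<le> i" using ab by simp
        moreover have "i < b" using ab by simp
        ultimately have "i \<in> covset w" using ab(1) unfolding covset_def by blast
        then show False using ci by simp
      qed
      then have "w!Suc i = N \<or> w!Suc i = E" using first_step[OF ab(1)] ab(2,3) by simp
      then show ?thesis using True il by (auto simp: T_nth)
    next
      case False
      then show ?thesis using ci ea il by (cases "w!i"; cases "w!Suc i") (auto simp: T_nth)
    qed
  qed
qed

lemma T_standard: "standard w \<Longrightarrow> standard (T w)"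
  unfolding standard_def
proof (intro allI impI)
  fix i j assume st: "\<forall>i j. i < j \<and> qp_subloop w i j \<longrightarrow> w ! i = N"
    and h: "i < j \<and> qp_subloop (T w) i j"
  then have l: "qp_subloop w i j" "i < j" using T_loops by auto
  then have "i < length w" by (auto simp: qp_subloop_def)
  moreover have "i \<in> covset w" using l by (auto simp: covset_def)
  moreover have "w ! i = N" using st l by blast
  ultimately show "T w ! i = N" by (simp add: T_nth)
qed

lemma T_big: "big_walk w \<Longrightarrow> big_walk (T w)"
  unfolding big_walk_def using T_eager T_standard T_diag by simp

lemma T_left: "left_walk w \<Longrightarrow> right_walk (T w)"
  unfolding left_walk_def right_walk_def using T_big T_end[of w]
  by (auto simp: big_walk_def)

lemma T_right: "right_walk w \<Longrightarrow> left_walk (T w)"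
  unfolding left_walk_def right_walk_def using T_big T_end[of w]
  by (auto simp: big_walk_def)

theorem lemma2p1:
  fixes n :: nat
  shows "card {w. length w = 2 * n \<and> left_walk w} = card {w. length w = 2 * n \<and> right_walk w}"
proof (rule bij_betw_same_card[of T])
  show "bij_betw T {w. length w = 2 * n \<and> left_walk w} {w. length w = 2 * n \<and> right_walk w}"
    by (rule bij_betw_byWitness[where f'=T]) (auto simp: TT T_left T_right)
qed

end
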